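(* Let $K\subset\mathcal{F}_n\mathbb{C}:=\{(c_1,\dots,c_n)\in\mathbb{C}^n: c_i\ne c_j\text{ for }i\ne j\}$ be compact. Then there exists $\varepsilon>0$ such that whenever $b\in K$ and $a\in\mathbb{C}^n$ satisfies $0<|a_j|\le\varepsilon$ for every $j$, the rational map $R_{a,b}(z)=\sum_{j=1}^n a_j/(z-b_j)$ is $n$-good.
   Context: A rational map $R$ of degree $n$ is $n$-good if $R^{-1}(\mathbb{D})$ is connected and bounded by $n$ disjoint analytic Jordan curves; known fact: a degree-$n$ rational map is $n$-good if and only if all its critical values lie in $\mathbb{D}$. *)

theory Defs
  imports "HOL-Analysis.Analysis"
begin

definition config_space :: "(complex ^ 'n) set" where
  "config_space = {c. \<forall>i j. i \<noteq> j \<longrightarrow> c $ i \<noteq> c $ j}"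

definition Rab :: "complex ^ 'n \<Rightarrow> complex ^ 'n \<Rightarrow> complex \<Rightarrow> complex" where
  "Rab a b z = (\<Sum>j\<in>UNIV. a $ j / (z - b $ j))"

definition analytic_jordan_curve :: "complex set \<Rightarrow> bool" where
  "analytic_jordan_curve C \<longleftrightarrow>
     (\<exists>U f. open U \<and> sphere 0 1 \<subseteq> U \<and> f holomorphic_on U \<and> inj_on f U \<and>
            C = f ` sphere 0 1)"

text \<open>Finite part of R^{-1}(D) for R = R_{a,b} (the point at infinity, mapped to 0,
  also belongs to the preimage; the poles b_j do not).\<close>
definition Rab_preimage_disc :: "complex ^ 'n \<Rightarrow> complex ^ 'n \<Rightarrow> complex set" where
  "Rab_preimage_disc a b = {z. (\<forall>j. z \<noteq> b $ j) \<and> norm (Rab a b z) < 1}"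

definition n_good :: "nat \<Rightarrow> complex set \<Rightarrow> bool" where
  "n_good n P \<longleftrightarrow> connected P \<and>
     (\<exists>C :: nat \<Rightarrow> complex set.
        (\<forall>i<n. analytic_jordan_curve (C i)) \<and>
        (\<forall>i<n. \<forall>j<n. i \<noteq> j \<longrightarrow> C i \<inter> C j = {}) \<and>
        frontier P = (\<Union>i<n. C i))"

end

theory Submission imports Defs begin

locale gsetup =
  fixes a b :: "complex ^ 'n" and D :: real
  assumes D_pos: "D > 0"
    and sep: "\<And>i k. i \<noteq> k \<Longrightarrow> D \<le> norm (b$i - b$k)"
    and a_pos: "\<And>j. 0 < norm (a$j)"
    and a_le: "\<And>j. norm (a$j) \<le> D / (64 * real CARD('n))"
begin

definition "\<delta> = D/4"
definition "h j z = (\<Sum>k\<in>UNIV-{j}. a$k/(z - b$k))"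

lemma m_ge1: "real CARD('n) \<ge> 1"
  by (simp add: Suc_leI)

lemma delta_pos: "\<delta> > 0" using D_pos by (simp add: \<delta>_def)

lemma a_le': "norm (a$j) * real CARD('n) \<le> \<delta>/16"
proof -
  have "norm (a$j) * real CARD('n) \<le> D / (64 * real CARD('n)) * real CARD('n)"
    using a_le[of j] m_ge1 by (intro mult_right_mono) auto
  also have "\<dots> = \<delta>/16" using m_ge1 by (simp add: \<delta>_def)
  finally show ?thesis .
qed

lemma a_le_delta: "norm (a$j) \<le> \<delta>/16"
proof -
  have "norm (a$j) * 1 \<le> norm (a$j) * real CARD('n)"
    using m_ge1 by (intro mult_left_mono) auto
  then show ?thesis using a_le'[of j] by simp
qed

lemma far: assumes "norm (z - b$j) \<le> \<delta>" "k \<noteq> j" shows "norm (z - b$k) \<ge> 3*\<delta>"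
proof -
  have "D \<le> norm (b$j - b$k)" using sep assms(2) by auto
  also have "\<dots> = norm ((z - b$k) - (z - b$j))" by simp
  also have "\<dots> \<le> norm (z - b$j) + norm (z - b$k)" using norm_triangle_ineq4[of "z - b$k" "z - b$j"] by simp
  finally show ?thesis using assms(1) by (simp add: \<delta>_def)
qed

lemma R_split: "Rab a b z = a$j/(z-b$j) + h j z"
  unfolding Rab_def h_def by (simp add: sum.remove)

lemma card_rem: "real (card (UNIV - {j::'n})) \<le> real CARD('n)"
  by (simp add: card_Diff_subset)

lemma h_bound: assumes "norm (z-b$j) \<le> \<delta>" shows "norm (h j z) \<le> 1/48"
proof -
  have "norm (h j z) \<le> (\<Sum>k\<in>UNIV-{j}. norm (a$k/(z - b$k)))"
    unfolding h_def by (rule norm_sum)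
  also have "\<dots> \<le> real (card (UNIV - {j})) * ((\<delta>/16) / real CARD('n) / (3*\<delta>))"
  proof (rule sum_bounded_above)
    fix k assume k: "k \<in> UNIV - {j}"
    have f: "norm (z - b$k) \<ge> 3*\<delta>" using far[OF assms] k by auto
    have "norm (a$k) \<le> (\<delta>/16) / real CARD('n)" using a_le'[of k] m_ge1 by (simp add: field_simps)
    then show "norm (a$k/(z - b$k)) \<le> (\<delta>/16) / real CARD('n) / (3*\<delta>)"
      unfolding norm_divide using f delta_pos
      by (intro frac_le) auto
  qed
  also have "\<dots> \<le> real CARD('n) * ((\<delta>/16) / real CARD('n) / (3*\<delta>))"
    using card_rem delta_pos by (intro mult_right_mono) auto
  also have "\<dots> = 1/48" using m_ge1 delta_pos by (simp add: field_simps)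
  finally show ?thesis .
qed

lemma aux1: "(m::real) \<ge> 1 \<Longrightarrow> d > 0 \<Longrightarrow> m * (d/16/m * x/(9*d^2)) = x/(144*d)"
  by (simp add: field_simps power2_eq_square)

lemma aux2: "(m::real) \<ge> 1 \<Longrightarrow> d > 0 \<Longrightarrow> m * (d/16/m/d) = 1/16"
  by (simp add: field_simps)

lemma aux3: "(m::real) \<ge> 1 \<Longrightarrow> d > 0 \<Longrightarrow> m * (d/16/m/(9*d^2)) = 1/(144*d)"
  by (simp add: field_simps power2_eq_square)

lemma lin_aux: "(R::real) \<le> Q + (1-q)/144 + X \<Longrightarrow> Q < q \<Longrightarrow> X \<le> (1-q)*(1/48) \<Longrightarrow> q \<le> 1 \<Longrightarrow> R < 1"
  by (simp add: field_simps)

lemma h_lip: assumes "norm (z-b$j) \<le> \<delta>" "norm (z'-b$j) \<le> \<delta>"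
  shows "norm (h j z - h j z') \<le> norm (z - z') / (144*\<delta>)"
proof -
  have "h j z - h j z' = (\<Sum>k\<in>UNIV-{j}. a$k/(z - b$k) - a$k/(z' - b$k))"
    unfolding h_def by (simp add: sum_subtractf)
  then have "norm (h j z - h j z') \<le> (\<Sum>k\<in>UNIV-{j}. norm (a$k/(z - b$k) - a$k/(z' - b$k)))"
    by (simp add: norm_sum)
  also have "\<dots> \<le> real (card (UNIV - {j})) * ((\<delta>/16) / real CARD('n) * norm (z - z') / (9*\<delta>^2))"
  proof (rule sum_bounded_above)
    fix k assume k: "k \<in> UNIV - {j}"
    have f: "norm (z - b$k) \<ge> 3*\<delta>" "norm (z' - b$k) \<ge> 3*\<delta>" using far assms k by auto
    then have nz: "z - b$k \<noteq> 0" "z' - b$k \<noteq> 0" using delta_pos by auto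
    have eq: "a$k/(z - b$k) - a$k/(z' - b$k) = a$k * (z' - z) / ((z - b$k) * (z' - b$k))"
      using nz by (simp add: field_simps)
    have ak: "norm (a$k) \<le> (\<delta>/16) / real CARD('n)" using a_le'[of k] m_ge1 by (simp add: field_simps)
    have den: "9*\<delta>^2 \<le> norm (z - b$k) * norm (z' - b$k)"
      using mult_mono[OF f] delta_pos by (simp add: power2_eq_square)
    show "norm (a$k/(z - b$k) - a$k/(z' - b$k)) \<le> (\<delta>/16) / real CARD('n) * norm (z - z') / (9*\<delta>^2)"
      unfolding eq norm_divide norm_mult
    proof (rule frac_le)
      show "cmod (a $ k) * cmod (z' - z) \<le> \<delta> / 16 / real CARD('n) * cmod (z - z')"
        using mult_right_mono[OF ak norm_ge_zero[of "z-z'"]] by (simp only: norm_minus_commute)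
      show "0 \<le> \<delta> / 16 / real CARD('n) * cmod (z - z')"
        using delta_pos by simp
      show "0 < 9 * \<delta>^2" using delta_pos by simp
    qed (fact den)
  qed
  also have "\<dots> \<le> real CARD('n) * ((\<delta>/16) / real CARD('n) * norm (z - z') / (9*\<delta>^2))"
    using card_rem delta_pos by (intro mult_right_mono) auto
  also have "\<dots> = norm (z - z') / (144*\<delta>)" by (rule aux1[OF m_ge1 delta_pos])
  finally show ?thesis .
qed

lemma ak_bound: "norm (a$k) \<le> (\<delta>/16) / real CARD('n)"
  using a_le'[of k] m_ge1 by (simp add: field_simps)

lemma R_out: assumes "\<And>k. norm (z - b$k) \<ge> \<delta>" shows "norm (Rab a b z) \<le> 1/16"
proof -
  have "norm (Rab a b z) \<le> (\<Sum>k\<in>UNIV. norm (a$k/(z - b$k)))"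
    unfolding Rab_def by (rule norm_sum)
  also have "\<dots> \<le> real (card (UNIV::'n set)) * ((\<delta>/16) / real CARD('n) / \<delta>)"
  proof (rule sum_bounded_above)
    fix k :: 'n
    show "norm (a$k/(z - b$k)) \<le> (\<delta>/16) / real CARD('n) / \<delta>"
      unfolding norm_divide
      by (rule frac_le) (use ak_bound[of k] assms[of k] delta_pos in auto)
  qed
  also have "\<dots> = 1/16" by (rule aux2[OF m_ge1 delta_pos])
  finally show ?thesis .
qed


definition "F j w u = 1/(w - h j (b$j + a$j*u))"

lemma au: assumes "norm u \<le> 4" shows "norm ((b$j + a$j*u) - b$j) \<le> \<delta>"
proof -
  have "norm (a$j*u) \<le> (\<delta>/16) * 4"
    unfolding norm_mult using assms a_le_delta[of j] delta_pos by (intro mult_mono) auto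
  then show ?thesis using delta_pos by simp
qed

lemma den_bound: assumes "norm w \<ge> 1/2" "norm u \<le> 4"
  shows "norm (w - h j (b$j + a$j*u)) \<ge> 1/4"
proof -
  have "norm (h j (b$j + a$j*u)) \<le> 1/48" using h_bound[OF au[OF assms(2)]] .
  moreover have "norm w - norm (h j (b$j + a$j*u)) \<le> norm (w - h j (b$j + a$j*u))"
    by (rule norm_triangle_ineq2)
  ultimately show ?thesis using assms(1) by linarith
qed

lemma F_bound: assumes "norm w \<ge> 1/2" "norm u \<le> 4" shows "norm (F j w u) \<le> 4"
proof -
  have d: "norm (w - h j (b$j + a$j*u)) \<ge> 1/4" by (rule den_bound[OF assms])
  then show ?thesis unfolding F_def norm_divide by (simp add: divide_le_eq)
qed

lemma F_lip: assumes "norm w \<ge> 1/2" "norm u \<le> 4" "norm u' \<le> 4"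
  shows "norm (F j w u - F j w u') \<le> 1/2 * norm (u - u')"
proof -
  define A where "A = w - h j (b$j + a$j*u)"
  define B where "B = w - h j (b$j + a$j*u')"
  have dA: "norm A \<ge> 1/4" unfolding A_def by (rule den_bound[OF assms(1,2)])
  have dB: "norm B \<ge> 1/4" unfolding B_def by (rule den_bound[OF assms(1,3)])
  have nz: "A \<noteq> 0" "B \<noteq> 0" using dA dB by auto
  have eq: "F j w u - F j w u' = (B - A) / (A * B)"
    unfolding F_def A_def[symmetric] B_def[symmetric] using nz by (simp add: field_simps)
  have BA: "B - A = h j (b$j + a$j*u) - h j (b$j + a$j*u')" unfolding A_def B_def by simp
  have "norm (B - A) \<le> norm ((b$j + a$j*u) - (b$j + a$j*u')) / (144*\<delta>)"
    unfolding BA by (rule h_lip[OF au[OF assms(2)] au[OF assms(3)]])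
  also have "norm ((b$j + a$j*u) - (b$j + a$j*u')) = norm (a$j) * norm (u - u')"
    by (simp add: norm_mult[symmetric] right_diff_distrib)
  also have "norm (a$j) * norm (u - u') / (144*\<delta>) \<le> (\<delta>/16) * norm (u - u') / (144*\<delta>)"
    using delta_pos a_le_delta[of j] by (intro divide_right_mono mult_right_mono) auto
  also have "\<dots> = norm (u - u') / 2304" using delta_pos by simp
  finally have nBA: "norm (B - A) \<le> norm (u - u') / 2304" .
  have AB: "norm (A * B) \<ge> 1/16"
    using mult_mono[OF dA dB] unfolding norm_mult by simp
  have "norm (F j w u - F j w u') = norm (B - A) / norm (A * B)"
    unfolding eq norm_divide ..
  also have "\<dots> \<le> (norm (u - u') / 2304) / (1/16)"
    by (rule frac_le) (use nBA AB in auto)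
  also have "\<dots> \<le> 1/2 * norm (u - u')" by simp
  finally show ?thesis .
qed

lemma fix_ex: assumes "norm w \<ge> 1/2" shows "\<exists>!u\<in>cball 0 4. F j w u = u"
proof (rule Banach_fix[where c="1/2"])
  show "complete (cball (0::complex) 4)" by (simp add: complete_eq_closed)
  show "F j w ` cball 0 4 \<subseteq> cball 0 4" using F_bound[OF assms] by auto
  show "dist (F j w x) (F j w y) \<le> 1/2 * dist x y" if "x \<in> cball 0 4" "y \<in> cball 0 4" for x y
    using F_lip[OF assms, of x y] that by (simp add: dist_norm)
qed auto

definition "Uf j w = (THE u. u \<in> cball 0 4 \<and> F j w u = u)"
definition "g j w = b$j + a$j * Uf j w"

lemma Uf: assumes "norm w \<ge> 1/2" shows "norm (Uf j w) \<le> 4" "F j w (Uf j w) = Uf j w"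
proof -
  have "\<exists>!u. u \<in> cball 0 4 \<and> F j w u = u" using fix_ex[OF assms] by auto
  from theI'[OF this] show "norm (Uf j w) \<le> 4" "F j w (Uf j w) = Uf j w"
    unfolding Uf_def by auto
qed

lemma Uf_unique: assumes "norm w \<ge> 1/2" "norm u \<le> 4" "F j w u = u" shows "u = Uf j w"
  using fix_ex[OF assms(1), of j] Uf[OF assms(1), of j] assms(2,3) by auto

lemma g_props: assumes "norm w \<ge> 1/2"
  shows "Rab a b (g j w) = w" "norm (g j w - b$j) \<le> \<delta>" "\<And>k. g j w \<noteq> b$k"
    "g j w - b$j = a$j * Uf j w"
proof -
  define u where "u = Uf j w"
  define A where "A = w - h j (g j w)"
  have gu: "g j w = b$j + a$j*u" unfolding g_def u_def ..
  have nA: "norm A \<ge> 1/4" unfolding A_def gu by (rule den_bound[OF assms]) (use Uf[OF assms] u_def in auto)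
  then have A0: "A \<noteq> 0" by auto
  have uA: "u = 1/A" using Uf(2)[OF assms, of j] unfolding F_def A_def gu u_def by simp
  then have u0: "u \<noteq> 0" using A0 by simp
  have a0: "a$j \<noteq> 0" using a_pos[of j] by auto
  show gb: "norm (g j w - b$j) \<le> \<delta>" unfolding gu using au[of u j] Uf(1)[OF assms] u_def by simp
  show "g j w - b$j = a$j * Uf j w" unfolding g_def by simp
  have "Rab a b (g j w) = a$j/(a$j*u) + h j (g j w)" using R_split[of "g j w" j] gu by simp
  also have "a$j/(a$j*u) = A" using a0 uA A0 by simp
  then have "a$j/(a$j*u) + h j (g j w) = A + h j (g j w)" by simp
  also have "\<dots> = w" unfolding A_def by simp
  finally show "Rab a b (g j w) = w" .
  show "g j w \<noteq> b$k" for k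
  proof (cases "k = j")
    case True then show ?thesis using gu a0 u0 by simp
  next
    case False then show ?thesis using far[OF gb False] delta_pos by auto
  qed
qed

lemma Uf_lip: assumes "norm w \<ge> 1/2" "norm w' \<ge> 1/2"
  shows "norm (Uf j w - Uf j w') \<le> 32 * norm (w - w')"
proof -
  define u where "u = Uf j w"
  define u' where "u' = Uf j w'"
  have u: "norm u \<le> 4" "F j w u = u" using Uf[OF assms(1)] u_def by auto
  have u': "norm u' \<le> 4" "F j w' u' = u'" using Uf[OF assms(2)] u'_def by auto
  define H where "H = h j (b$j + a$j*u')"
  have dA: "norm (w - H) \<ge> 1/4" unfolding H_def by (rule den_bound[OF assms(1) u'(1)])
  have dB: "norm (w' - H) \<ge> 1/4" unfolding H_def by (rule den_bound[OF assms(2) u'(1)])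
  have nz: "w - H \<noteq> 0" "w' - H \<noteq> 0" using dA dB by auto
  have eq: "F j w u' - F j w' u' = (w' - w) / ((w - H) * (w' - H))"
    unfolding F_def H_def[symmetric] using nz by (simp add: field_simps)
  have AB: "norm ((w - H) * (w' - H)) \<ge> 1/16"
    using mult_mono[OF dA dB] unfolding norm_mult by simp
  have t2: "norm (F j w u' - F j w' u') \<le> 16 * norm (w - w')"
  proof -
    have "norm (F j w u' - F j w' u') = norm (w' - w) / norm ((w - H) * (w' - H))"
      unfolding eq norm_divide ..
    also have "\<dots> \<le> norm (w' - w) / (1/16)"
      by (rule frac_le) (use AB in auto)
    finally show ?thesis by (simp add: norm_minus_commute)
  qed
  have t1: "norm (F j w u - F j w u') \<le> 1/2 * norm (u - u')" by (rule F_lip[OF assms(1) u(1) u'(1)])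
  have "u - u' = (F j w u - F j w u') + (F j w u' - F j w' u')" using u(2) u'(2) by simp
  then have "norm (u - u') \<le> norm (F j w u - F j w u') + norm (F j w u' - F j w' u')"
    by (metis norm_triangle_ineq)
  then have "norm (u - u') \<le> 1/2 * norm (u - u') + 16 * norm (w - w')" using t1 t2 by linarith
  then show ?thesis unfolding u_def u'_def by linarith
qed

lemma g_lip: assumes "norm w \<ge> 1/2" "norm w' \<ge> 1/2"
  shows "norm (g j w - g j w') \<le> 32 * norm (a$j) * norm (w - w')"
proof -
  have "g j w - g j w' = a$j * (Uf j w - Uf j w')" unfolding g_def by (simp add: right_diff_distrib)
  then have "norm (g j w - g j w') = norm (a$j) * norm (Uf j w - Uf j w')" by (simp add: norm_mult)
  also have "\<dots> \<le> norm (a$j) * (32 * norm (w - w'))"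
    by (rule mult_left_mono[OF Uf_lip[OF assms]]) simp
  finally show ?thesis by simp
qed


definition "Rd z = (\<Sum>k\<in>UNIV. - a$k/(z-b$k)^2)"

lemma R_deriv: assumes "\<And>k. z \<noteq> b$k" shows "(Rab a b has_field_derivative Rd z) (at z)"
proof -
  have e: "Rab a b = (\<lambda>z. \<Sum>k\<in>UNIV. a$k/(z-b$k))" by (rule ext) (simp add: Rab_def)
  show ?thesis unfolding e Rd_def
  proof (rule DERIV_sum)
    fix k :: 'n
    have nz: "z - b$k \<noteq> 0" using assms[of k] by simp
    show "((\<lambda>z. a$k/(z-b$k)) has_field_derivative - a$k/(z-b$k)^2) (at z)"
      by (rule derivative_eq_intros refl | use nz in \<open>simp add: field_simps power2_eq_square\<close>)+
  qed
qed

lemma Rd_nz: assumes "norm w \<ge> 1/2" shows "Rd (g j w) \<noteq> 0"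
proof -
  define z where "z = g j w"
  define u where "u = Uf j w"
  have zb: "z - b$j = a$j * u" unfolding z_def u_def by (rule g_props(4)[OF assms])
  have zb': "norm (z - b$j) \<le> \<delta>" unfolding z_def by (rule g_props(2)[OF assms])
  have un: "norm u \<le> 4" unfolding u_def by (rule Uf(1)[OF assms])
  have nz: "z - b$j \<noteq> 0" using g_props(3)[OF assms] z_def by auto
  have a0: "a$j \<noteq> 0" using a_pos[of j] by auto
  have u0: "u \<noteq> 0" using nz zb by auto
  define T where "T = (\<Sum>k\<in>UNIV-{j}. - a$k/(z-b$k)^2)"
  have split: "Rd z = - a$j/(z-b$j)^2 + T" unfolding Rd_def T_def by (simp add: sum.remove)
  have "norm T \<le> (\<Sum>k\<in>UNIV-{j}. norm (- a$k/(z-b$k)^2))" unfolding T_def by (rule norm_sum)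
  also have "\<dots> \<le> real (card (UNIV - {j})) * ((\<delta>/16) / real CARD('n) / (9*\<delta>^2))"
  proof (rule sum_bounded_above)
    fix k assume k: "k \<in> UNIV - {j}"
    have f: "norm (z - b$k) \<ge> 3*\<delta>" using far[OF zb'] k by auto
    have f2: "norm ((z - b$k)^2) \<ge> 9*\<delta>^2"
      using mult_mono[OF f f] delta_pos by (simp add: norm_power power2_eq_square norm_mult)
    show "norm (- a$k/(z-b$k)^2) \<le> (\<delta>/16) / real CARD('n) / (9*\<delta>^2)"
      unfolding norm_divide norm_minus_cancel
      by (rule frac_le) (use ak_bound[of k] f2 delta_pos in auto)
  qed
  also have "\<dots> \<le> real CARD('n) * ((\<delta>/16) / real CARD('n) / (9*\<delta>^2))"
    using card_rem delta_pos by (intro mult_right_mono) auto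
  also have "\<dots> = 1/(144*\<delta>)" by (rule aux3[OF m_ge1 delta_pos])
  finally have nT: "norm T \<le> 1/(144*\<delta>)" .
  have "- a$j/(z-b$j)^2 = - 1/(a$j * u^2)" unfolding zb using a0 u0 by (simp add: field_simps power2_eq_square)
  then have "norm (- a$j/(z-b$j)^2) = 1/(norm (a$j) * norm u ^2)" by (simp add: norm_divide norm_mult norm_power)
  also have "\<dots> \<ge> 1/((\<delta>/16) * 4^2)"
  proof (rule divide_left_mono)
    show "norm (a$j) * norm u ^2 \<le> (\<delta>/16) * 4^2"
      using a_le_delta[of j] un delta_pos by (intro mult_mono power_mono) auto
    show "0 < ((\<delta>/16) * 4^2) * (norm (a$j) * norm u ^2)" using a0 u0 delta_pos by simp
  qed simp
  finally have nA: "norm (- a$j/(z-b$j)^2) \<ge> 1/\<delta>" by simp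
  have "1/(144*\<delta>) < 1/\<delta>" using delta_pos by (simp add: field_simps)
  then have "norm T < norm (- a$j/(z-b$j)^2)" using nT nA by linarith
  then have "- a$j/(z-b$j)^2 + T \<noteq> 0"
    by (metis add.inverse_unique less_irrefl norm_minus_cancel)
  then show ?thesis using split z_def by simp
qed

definition "Wd = - cball (0::complex) (1/2)"

lemma Wd_open: "open Wd" unfolding Wd_def by auto
lemma Wd_mem: "w \<in> Wd \<Longrightarrow> norm w \<ge> 1/2" unfolding Wd_def by auto
lemma sphere_Wd: "sphere 0 1 \<subseteq> Wd" unfolding Wd_def by auto

lemma g_cont: "continuous_on Wd (g j)"
proof (rule lipschitz_on_continuous_on)
  show "(32 * norm (a$j))-lipschitz_on Wd (g j)"
    by (rule lipschitz_onI) (use g_lip Wd_mem in \<open>auto simp: dist_norm\<close>)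
qed

lemma g_holo: "g j holomorphic_on Wd"
  unfolding holomorphic_on_open[OF Wd_open]
proof
  fix w assume w: "w \<in> Wd"
  have "DERIV (g j) w :> inverse (Rd (g j w))"
  proof (rule has_field_derivative_inverse_basic[where f="Rab a b" and t=Wd])
    show "DERIV (Rab a b) (g j w) :> Rd (g j w)" by (rule R_deriv[OF g_props(3)[OF Wd_mem[OF w]]])
    show "Rd (g j w) \<noteq> 0" by (rule Rd_nz[OF Wd_mem[OF w]])
    show "continuous (at w) (g j)" using g_cont Wd_open w continuous_on_eq_continuous_at by blast
    show "\<And>z. z \<in> Wd \<Longrightarrow> Rab a b (g j z) = z" using g_props(1) Wd_mem by blast
  qed (use Wd_open w in auto)
  then show "\<exists>f'. DERIV (g j) w :> f'" by blast
qed

lemma g_inj: "inj_on (g j) Wd"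
  by (rule inj_on_inverseI[where g="Rab a b"]) (use g_props(1) Wd_mem in blast)


definition "S0 = {z. \<forall>k. z \<noteq> b$k}"
abbreviation "P \<equiv> Rab_preimage_disc a b"

lemma S0_eq: "S0 = - range (\<lambda>k. b$k)" unfolding S0_def by auto
lemma S0_open: "open S0" unfolding S0_eq by (intro open_Compl finite_imp_closed) auto

lemma R_cont: "continuous_on S0 (Rab a b)"
proof -
  have e: "Rab a b = (\<lambda>z. \<Sum>k\<in>UNIV. a$k/(z-b$k))" by (rule ext) (simp add: Rab_def)
  show ?thesis unfolding e
    by (intro continuous_intros) (auto simp: S0_def)
qed

lemma P_eq: "P = S0 \<inter> Rab a b -` ball 0 1"
  unfolding Rab_preimage_disc_def S0_def by auto

lemma P_open: "open P"
  unfolding P_eq by (rule continuous_open_preimage[OF R_cont S0_open]) auto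

lemma near_pole: assumes "z \<noteq> b$k" "norm (z - b$k) < norm (a$k)/2"
  shows "norm (Rab a b z) > 1"
proof -
  have zb: "norm (z - b$k) \<le> \<delta>" using assms(2) a_le_delta[of k] delta_pos by linarith
  have hb: "norm (h k z) \<le> 1/48" by (rule h_bound[OF zb])
  have pos: "norm (z - b$k) > 0" using assms(1) by simp
  have "2 < norm (a$k) / norm (z - b$k)" using assms(2) pos by (simp add: field_simps)
  also have "\<dots> = norm (a$k/(z - b$k))" by (simp add: norm_divide)
  finally have big: "norm (a$k/(z - b$k)) > 2" .
  have "norm (a$k/(z - b$k)) - norm (h k z) \<le> norm (a$k/(z - b$k) + h k z)"
    by (metis norm_diff_ineq)
  then show ?thesis using R_split[of z k] big hb by simp
qed

definition "G = {z. \<forall>k. norm (a$k)/2 \<le> norm (z - b$k)}"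

lemma G_closed: "closed G"
  unfolding G_def by (intro closed_Collect_all closed_Collect_le continuous_intros)

lemma G_S0: "G \<subseteq> S0" unfolding G_def S0_def
proof
  fix z assume z: "z \<in> {z. \<forall>k. norm (a$k)/2 \<le> norm (z - b$k)}"
  show "z \<in> {z. \<forall>k. z \<noteq> b$k}"
  proof (intro CollectI allI notI)
    fix k assume zk: "z = b$k"
    from z have "norm (a$k)/2 \<le> norm (z - b$k)" by blast
    then have "norm (a$k) \<le> 0" using zk by simp
    then show False using a_pos[of k] by simp
  qed
qed

lemma closure_P: "closure P \<subseteq> G \<inter> Rab a b -` cball 0 1"
proof (rule closure_minimal)
  show "closed (G \<inter> Rab a b -` cball 0 1)"
    by (rule continuous_closed_preimage[OF continuous_on_subset[OF R_cont G_S0] G_closed]) auto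
  show "P \<subseteq> G \<inter> Rab a b -` cball 0 1"
  proof
    fix z assume z: "z \<in> P"
    then have z1: "\<forall>k. z \<noteq> b$k" "norm (Rab a b z) < 1" unfolding Rab_preimage_disc_def by auto
    have "z \<in> G" unfolding G_def
    proof (intro CollectI allI)
      fix k show "norm (a$k)/2 \<le> norm (z - b$k)"
      proof (rule ccontr)
        assume "\<not> norm (a$k)/2 \<le> norm (z - b$k)"
        then have "norm (Rab a b z) > 1" using near_pole[of z k] z1(1) by auto
        then show False using z1(2) by simp
      qed
    qed
    then show "z \<in> G \<inter> Rab a b -` cball 0 1" using z1 by auto
  qed
qed

lemma frontier_sub: "frontier P \<subseteq> {z. (\<forall>k. z \<noteq> b$k) \<and> norm (Rab a b z) = 1}"
proof
  fix z assume z: "z \<in> frontier P"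
  then have zc: "z \<in> closure P" and zn: "z \<notin> P"
    unfolding frontier_def interior_open[OF P_open] by auto
  have "z \<in> G" "norm (Rab a b z) \<le> 1" using closure_P zc by auto
  then have nb: "\<forall>k. z \<noteq> b$k" using G_S0 S0_def by auto
  then have "\<not> norm (Rab a b z) < 1" using zn unfolding Rab_preimage_disc_def by auto
  then show "z \<in> {z. (\<forall>k. z \<noteq> b$k) \<and> norm (Rab a b z) = 1}"
    using nb \<open>norm (Rab a b z) \<le> 1\<close> by auto
qed

lemma level_sub: assumes "\<forall>k. z \<noteq> b$k" "norm (Rab a b z) = 1"
  shows "z \<in> (\<Union>j. g j ` sphere 0 1)"
proof -
  have "\<exists>j. norm (z - b$j) < \<delta>"
  proof (rule ccontr)
    assume "\<not> (\<exists>j. norm (z - b$j) < \<delta>)"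
    then have "norm (Rab a b z) \<le> 1/16" by (intro R_out) (simp add: not_less)
    then show False using assms(2) by simp
  qed
  then obtain j where j: "norm (z - b$j) < \<delta>" by blast
  define w where "w = Rab a b z"
  have w1: "norm w = 1" using assms w_def by simp
  have a0: "a$j \<noteq> 0" using a_pos[of j] by auto
  define u where "u = (z - b$j)/a$j"
  have zu: "z = b$j + a$j*u" unfolding u_def using a0 by simp
  have nz: "z - b$j \<noteq> 0" using assms(1) by auto
  have u0: "u \<noteq> 0" using nz a0 unfolding u_def by simp
  have hb: "norm (h j z) \<le> 1/48" using h_bound j by simp
  have iu: "1/u = w - h j z" unfolding w_def R_split[of z j] u_def by simp
  have "norm (1/u) \<ge> 1 - 1/48" unfolding iu using w1 hb norm_triangle_ineq2[of w "h j z"] by linarith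
  then have "1/norm u \<ge> 47/48" by (simp add: norm_divide)
  then have un: "norm u \<le> 4" using u0 by (simp add: field_simps)
  have Fu: "F j w u = u" unfolding F_def zu[symmetric] iu[symmetric] by simp
  have "u = Uf j w" by (rule Uf_unique) (use w1 un Fu in auto)
  then have "z = g j w" unfolding g_def zu by simp
  then have "z \<in> g j ` sphere 0 1" using w1 by simp
  then show ?thesis by (rule UN_I[OF UNIV_I])
qed

lemma curve_sub: assumes "norm w = 1" shows "g j w \<in> frontier P"
proof -
  have w: "norm w \<ge> 1/2" using assms by simp
  have notP: "g j w \<notin> P" using g_props(1)[OF w] assms unfolding Rab_preimage_disc_def by auto
  have "g j w \<in> closure P"
    unfolding closure_approachable
  proof (intro allI impI)
    fix e :: real assume e: "e > 0"
    have a0: "norm (a$j) > 0" using a_pos by simp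
    define t where "t = min (1/2) (e/(64*norm (a$j)))"
    have t: "0 < t" "t \<le> 1/2" "t \<le> e/(64*norm (a$j))" unfolding t_def using e a0 by auto
    define w' where "w' = of_real (1-t) * w"
    have nw': "norm w' = 1 - t" unfolding w'_def norm_mult norm_of_real using assms t by simp
    have w'h: "norm w' \<ge> 1/2" using nw' t by simp
    have inP: "g j w' \<in> P" unfolding Rab_preimage_disc_def using g_props(1,3)[OF w'h] nw' t by auto
    have ww: "w' - w = - (of_real t * w)" unfolding w'_def by (simp add: algebra_simps)
    have nww: "norm (w' - w) = t" unfolding ww norm_minus_cancel norm_mult using assms t by simp
    have "dist (g j w') (g j w) \<le> 32 * norm (a$j) * norm (w' - w)"
      unfolding dist_norm by (rule g_lip[OF w'h w])
    also have "\<dots> = 32 * norm (a$j) * t" by (simp add: nww)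
    also have "32 * norm (a$j) * t \<le> 32 * norm (a$j) * (e/(64*norm (a$j)))"
      using t a0 by (intro mult_left_mono) auto
    also have "\<dots> = e/2" using a0 by simp
    finally have "dist (g j w') (g j w) \<le> e/2" .
    then have "dist (g j w') (g j w) < e" using e by linarith
    then show "\<exists>y\<in>P. dist y (g j w) < e" using inP by blast
  qed
  then show ?thesis unfolding frontier_def interior_open[OF P_open] using notP by auto
qed

lemma frontier_eq: "frontier P = (\<Union>j. g j ` sphere 0 1)"
proof
  show "frontier P \<subseteq> (\<Union>j. g j ` sphere 0 1)"
  proof
    fix z assume "z \<in> frontier P"
    then have "z \<in> {z. (\<forall>k. z \<noteq> b$k) \<and> norm (Rab a b z) = 1}" using frontier_sub by (rule subsetD[rotated])
    then show "z \<in> (\<Union>j. g j ` sphere 0 1)" by (intro level_sub) auto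
  qed
  show "(\<Union>j. g j ` sphere 0 1) \<subseteq> frontier P"
  proof
    fix z assume "z \<in> (\<Union>j. g j ` sphere 0 1)"
    then obtain j w where "norm w = 1" "z = g j w" by auto
    then show "z \<in> frontier P" using curve_sub by simp
  qed
qed


definition "Phi z = z + (\<Sum>k\<in>UNIV. of_real (max 0 (\<delta> - norm (z - b$k)) / norm (z - b$k)) * (z - b$k))"

lemma Phi_out: assumes "\<And>k. norm (z - b$k) \<ge> \<delta>" shows "Phi z = z"
proof -
  have "max 0 (\<delta> - norm (z - b$k)) = 0" for k using assms[of k] by simp
  then show ?thesis unfolding Phi_def by simp
qed

lemma Phi_in: assumes "norm (z - b$j) < \<delta>"
  shows "Phi z = z + of_real ((\<delta> - norm (z - b$j)) / norm (z - b$j)) * (z - b$j)"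
proof -
  have zj: "norm (z - b$j) \<le> \<delta>" using assms by simp
  have "max 0 (\<delta> - norm (z - b$k)) = 0" if "k \<noteq> j" for k
    using far[OF zj that] delta_pos by simp
  then have "(\<Sum>k\<in>UNIV-{j}. of_real (max 0 (\<delta> - norm (z - b$k)) / norm (z - b$k)) * (z - b$k)) = 0"
    by (intro sum.neutral) auto
  moreover have "max 0 (\<delta> - norm (z - b$j)) = \<delta> - norm (z - b$j)" using assms by simp
  ultimately show ?thesis unfolding Phi_def
    using sum.remove[OF finite UNIV_I[of j], of "\<lambda>k. of_real (max 0 (\<delta> - norm (z - b$k)) / norm (z - b$k)) * (z - b$k)"]
    by simp
qed

lemma good_in_P: assumes "\<And>k. norm (z - b$k) \<ge> \<delta>" shows "z \<in> P"
proof -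
  have "\<forall>k. z \<noteq> b$k" using assms delta_pos by (metis norm_zero right_minus_eq not_le)
  moreover have "norm (Rab a b z) < 1" using R_out[OF assms] by simp
  ultimately show ?thesis unfolding Rab_preimage_disc_def by simp
qed

lemma Phi_good: assumes "z \<in> S0" shows "norm (Phi z - b$k) \<ge> \<delta>"
proof (cases "\<exists>j. norm (z - b$j) < \<delta>")
  case True
  then obtain j where j: "norm (z - b$j) < \<delta>" by blast
  define r where "r = norm (z - b$j)"
  have r0: "r > 0" using assms unfolding S0_def r_def by auto
  have "Phi z - b$j = of_real (1 + (\<delta> - r)/r) * (z - b$j)"
    unfolding Phi_in[OF j] r_def[symmetric] by (simp add: algebra_simps)
  also have "1 + (\<delta> - r)/r = \<delta>/r" using r0 by (simp add: field_simps)
  finally have e1: "Phi z - b$j = of_real (\<delta>/r) * (z - b$j)" .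
  have "norm (Phi z - b$j) = \<bar>\<delta>/r\<bar> * r" unfolding e1 norm_mult norm_of_real r_def ..
  then have eq: "norm (Phi z - b$j) = \<delta>" using r0 delta_pos by simp
  show ?thesis
  proof (cases "k = j")
    case True then show ?thesis using eq by simp
  next
    case False then show ?thesis using far[of "Phi z" j k] eq delta_pos by simp
  qed
next
  case False
  then have "Phi z = z" by (intro Phi_out) (simp add: not_less)
  then show ?thesis using False by (simp add: not_less)
qed

lemma radial: assumes zP: "z \<in> P" and zj: "norm (z - b$j) \<le> \<delta>" and t1: "t \<ge> 1"
  and tr: "t * norm (z - b$j) \<le> \<delta>"
  shows "b$j + of_real t * (z - b$j) \<in> P"
proof -
  define p where "p = b$j + of_real t * (z - b$j)"
  define r where "r = norm (z - b$j)"
  have z1: "\<forall>k. z \<noteq> b$k" "norm (Rab a b z) < 1" using zP unfolding Rab_preimage_disc_def by auto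
  have r0: "r > 0" using z1(1) unfolding r_def by auto
  have t0: "t > 0" using t1 by simp
  have pb: "p - b$j = of_real t * (z - b$j)" unfolding p_def by simp
  have npb: "norm (p - b$j) = t * r" unfolding pb norm_mult r_def using t0 by simp
  have pj: "norm (p - b$j) \<le> \<delta>" using npb tr r_def by simp
  have pnz: "p \<noteq> b$k" for k
  proof (cases "k = j")
    case True then show ?thesis using npb t0 r0 by auto
  next
    case False then show ?thesis using far[OF pj False] delta_pos by auto
  qed
  define q where "q = 1/t"
  have q: "0 < q" "q \<le> 1" unfolding q_def using t1 by auto
  have zjnz: "z - b$j \<noteq> 0" using r0 r_def by auto
  have Rp: "Rab a b p = of_real q * Rab a b z + (h j p - h j z) + of_real (1 - q) * h j z"
  proof -
    have "Rab a b p = a$j/(of_real t * (z - b$j)) + h j p" using R_split[of p j] pb by simp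
    also have "a$j/(of_real t * (z - b$j)) = of_real q * (a$j/(z - b$j))"
      unfolding q_def using t0 by (simp add: field_simps)
    also have "a$j/(z - b$j) = Rab a b z - h j z" using R_split[of z j] by simp
    finally show ?thesis by (simp add: algebra_simps)
  qed
  have pz: "p - z = of_real (t - 1) * (z - b$j)" unfolding p_def by (simp add: algebra_simps)
  have "norm (p - z) = \<bar>t - 1\<bar> * r" unfolding pz norm_mult norm_of_real r_def ..
  then have npz: "norm (p - z) = (t - 1) * r" using t1 by simp
  have "norm (h j p - h j z) \<le> norm (p - z) / (144*\<delta>)" by (rule h_lip[OF pj zj])
  also have "\<dots> = (t - 1) * r / (144*\<delta>)" unfolding npz ..
  finally have hd: "norm (h j p - h j z) \<le> (t - 1) * r / (144*\<delta>)" .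
  have "(t - 1) * r / (144*\<delta>) \<le> (1 - q) / 144"
  proof -
    have "(t - 1) * r = (1 - q) * (t * r)" unfolding q_def using t0 by (simp add: field_simps)
    also have "\<dots> \<le> (1 - q) * \<delta>" using tr r_def q by (intro mult_left_mono) auto
    finally show ?thesis using delta_pos by (simp add: field_simps)
  qed
  with hd have hd': "norm (h j p - h j z) \<le> (1 - q) / 144" by linarith
  have hz: "norm (h j z) \<le> 1/48" by (rule h_bound[OF zj])
  have tri: "norm (X + Y + Z) \<le> norm X + norm Y + norm Z" for X Y Z :: complex
    by (rule order_trans[OF norm_triangle_ineq add_right_mono[OF norm_triangle_ineq]])
  have n1: "norm (of_real q * Rab a b z) = q * norm (Rab a b z)" using q by (simp add: norm_mult)
  have "norm (of_real (1 - q) * h j z) = \<bar>1 - q\<bar> * norm (h j z)" unfolding norm_mult norm_of_real ..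
  then have n2: "norm (of_real (1 - q) * h j z) = (1 - q) * norm (h j z)" using q by simp
  have "norm (Rab a b p) \<le> q * norm (Rab a b z) + (1 - q) / 144 + (1 - q) * norm (h j z)"
    using tri[of "of_real q * Rab a b z" "h j p - h j z" "of_real (1 - q) * h j z"] n1 n2 hd' unfolding Rp
    by linarith
  moreover have "q * norm (Rab a b z) < q" using q z1(2) by simp
  moreover have "(1 - q) * norm (h j z) \<le> (1 - q) * (1/48)" using q hz by (intro mult_left_mono) auto
  ultimately have "norm (Rab a b p) < 1" using q lin_aux by force
  then show ?thesis unfolding p_def[symmetric] Rab_preimage_disc_def using pnz by simp
qed

lemma seg_sub: assumes "z \<in> P" shows "closed_segment z (Phi z) \<subseteq> P"
proof (cases "\<exists>j. norm (z - b$j) < \<delta>")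
  case True
  then obtain j where j: "norm (z - b$j) < \<delta>" by blast
  define r where "r = norm (z - b$j)"
  have r0: "r > 0" using assms unfolding Rab_preimage_disc_def r_def by auto
  define c where "c = (\<delta> - r)/r"
  have c0: "c \<ge> 0" unfolding c_def using j r0 r_def by simp
  have Ph: "Phi z = z + of_real c * (z - b$j)" unfolding Phi_in[OF j] c_def r_def ..
  show ?thesis
  proof
    fix p assume "p \<in> closed_segment z (Phi z)"
    then obtain s where s: "0 \<le> s" "s \<le> 1" "p = (1 - s) *\<^sub>R z + s *\<^sub>R Phi z"
      unfolding in_segment by blast
    have "p = b$j + of_real (1 + s*c) * (z - b$j)"
      unfolding s(3) Ph scaleR_conv_of_real by (simp add: algebra_simps)
    moreover have "1 + s*c \<ge> 1" using s c0 by simp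
    moreover have "(1 + s*c) * r \<le> \<delta>"
    proof -
      have "(1 + s*c) * r = r + s * (\<delta> - r)" unfolding c_def using r0 by (simp add: field_simps)
      also have "\<dots> \<le> r + 1 * (\<delta> - r)" using s j r_def by (intro add_left_mono mult_right_mono) auto
      finally show ?thesis by simp
    qed
    ultimately show "p \<in> P" using radial[OF assms, of j "1 + s*c"] j r_def by simp
  qed
next
  case False
  then have "Phi z = z" by (intro Phi_out) (simp add: not_less)
  then show ?thesis using assms by simp
qed

lemma Phi_cont: "continuous_on S0 Phi"
  unfolding Phi_def by (intro continuous_intros) (auto simp: S0_def)

lemma S0_conn: "connected S0"
proof -
  have "path_connected (- range (\<lambda>k. b$k))"
    by (rule path_connected_complement_countable) (auto intro: countable_finite)
  then show ?thesis unfolding S0_eq by (rule path_connected_imp_connected)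
qed

lemma S0_ne: "S0 \<noteq> {}"
proof
  assume "S0 = {}"
  then have "UNIV = range (\<lambda>k. b$k)" unfolding S0_eq by auto
  then have "finite (UNIV :: complex set)" by (metis finite_imageI finite)
  then show False using infinite_UNIV_char_0 by auto
qed

lemma P_conn: "connected P"
proof -
  define \<Omega> where "\<Omega> = Phi ` S0"
  have Oc: "connected \<Omega>" unfolding \<Omega>_def by (rule connected_continuous_image[OF Phi_cont S0_conn])
  have OP: "\<Omega> \<subseteq> P" unfolding \<Omega>_def using Phi_good good_in_P by blast
  have One: "\<Omega> \<noteq> {}" unfolding \<Omega>_def using S0_ne by simp
  define Fam where "Fam = (\<lambda>z. \<Omega> \<union> closed_segment z (Phi z)) ` P"
  have "P = \<Union> Fam"
  proof
    show "P \<subseteq> \<Union> Fam" unfolding Fam_def by auto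
    show "\<Union> Fam \<subseteq> P" unfolding Fam_def using OP seg_sub by auto
  qed
  moreover have "connected (\<Union> Fam)"
  proof (rule connected_Union)
    fix X assume "X \<in> Fam"
    then obtain z where z: "z \<in> P" "X = \<Omega> \<union> closed_segment z (Phi z)" unfolding Fam_def by auto
    have "z \<in> S0" using z(1) unfolding S0_def Rab_preimage_disc_def by auto
    then have "Phi z \<in> \<Omega> \<inter> closed_segment z (Phi z)" unfolding \<Omega>_def by auto
    then show "connected X" unfolding z(2) using Oc by (intro connected_Un) auto
  next
    show "\<Inter> Fam \<noteq> {}" using One unfolding Fam_def by blast
  qed
  ultimately show ?thesis by simp
qed


lemma ngood: "n_good CARD('n) (Rab_preimage_disc a b)"
proof -
  obtain hb where hb: "bij_betw hb {0..<CARD('n)} (UNIV::'n set)"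
    using ex_bij_betw_nat_finite[of "UNIV::'n set"] by auto
  have hb_surj: "hb ` {..<CARD('n)} = UNIV" using hb by (simp add: bij_betw_def lessThan_atLeast0)
  have hb_inj: "inj_on hb {..<CARD('n)}" using hb by (simp add: bij_betw_def lessThan_atLeast0)
  show ?thesis unfolding n_good_def
  proof (intro conjI exI[of _ "\<lambda>i. g (hb i) ` sphere 0 1"])
    show "connected P" by (rule P_conn)
    show "\<forall>i<CARD('n). analytic_jordan_curve (g (hb i) ` sphere 0 1)"
      unfolding analytic_jordan_curve_def
    proof (intro allI impI exI[of _ Wd] exI[of _ "g (hb i)" for i] conjI)
      fix i show "open Wd" "sphere 0 1 \<subseteq> Wd" "g (hb i) holomorphic_on Wd" "inj_on (g (hb i)) Wd"
        "g (hb i) ` sphere 0 1 = g (hb i) ` sphere 0 1"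
        using Wd_open sphere_Wd g_holo g_inj by auto
    qed
    show "\<forall>i<CARD('n). \<forall>j<CARD('n). i \<noteq> j \<longrightarrow> g (hb i) ` sphere 0 1 \<inter> g (hb j) ` sphere 0 1 = {}"
    proof (intro allI impI)
      fix i j assume ij: "i < CARD('n)" "j < CARD('n)" "i \<noteq> j"
      have ne: "hb j \<noteq> hb i" using inj_on_eq_iff[OF hb_inj, of j i] ij by auto
      show "g (hb i) ` sphere 0 1 \<inter> g (hb j) ` sphere 0 1 = {}"
      proof (rule ccontr)
        assume "g (hb i) ` sphere 0 1 \<inter> g (hb j) ` sphere 0 1 \<noteq> {}"
        then obtain w w' where w: "norm w = 1" "norm w' = 1" "g (hb i) w = g (hb j) w'" by auto
        have c1: "norm (g (hb i) w - b$(hb i)) \<le> \<delta>" using g_props(2) w(1) by simp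
        have c2: "norm (g (hb j) w' - b$(hb j)) \<le> \<delta>" using g_props(2) w(2) by simp
        have "norm (g (hb i) w - b$(hb j)) \<ge> 3*\<delta>" by (rule far[OF c1 ne])
        then show False using c2 w(3) delta_pos by simp
      qed
    qed
    have "(\<Union>i<CARD('n). g (hb i) ` sphere 0 1) = (\<Union>j\<in>hb ` {..<CARD('n)}. g j ` sphere 0 1)"
      by simp
    also have "\<dots> = (\<Union>j. g j ` sphere 0 1)" unfolding hb_surj ..
    finally show "frontier P = (\<Union>i<CARD('n). g (hb i) ` sphere 0 1)" using frontier_eq by simp
  qed
qed

end

lemma separation:
  fixes K :: "(complex ^ 'n) set"
  assumes "compact K" and "K \<subseteq> config_space"
  shows "\<exists>D>0. \<forall>b\<in>K. \<forall>i k. i \<noteq> k \<longrightarrow> D \<le> norm (b$i - b$k)"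
proof -
  have ex: "\<exists>d>0. \<forall>b\<in>K. fst p \<noteq> snd p \<longrightarrow> d \<le> norm (b$fst p - b$snd p)" for p :: "'n \<times> 'n"
  proof (cases "fst p \<noteq> snd p \<and> K \<noteq> {}")
    case True
    have "continuous_on K (\<lambda>b. norm (b$fst p - b$snd p))" by (intro continuous_intros)
    then obtain b0 where b0: "b0 \<in> K" "\<forall>b\<in>K. norm (b0$fst p - b0$snd p) \<le> norm (b$fst p - b$snd p)"
      using continuous_attains_inf[OF assms(1)] True by blast
    have "b0$fst p \<noteq> b0$snd p" using assms(2) b0(1) True unfolding config_space_def by auto
    then show ?thesis using b0 by (intro exI[of _ "norm (b0$fst p - b0$snd p)"]) auto
  next
    case False then show ?thesis by (intro exI[of _ 1]) auto
  qed
  have "\<forall>p. \<exists>d. d > 0 \<and> (\<forall>b\<in>K. fst p \<noteq> snd p \<longrightarrow> d \<le> norm (b$fst p - b$snd p))"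
    using ex by blast
  then obtain dd where ddp: "\<forall>p. dd p > 0 \<and> (\<forall>b\<in>K. fst p \<noteq> snd p \<longrightarrow> dd p \<le> norm (b$fst p - b$snd p))"
    using choice[of "\<lambda>p d. d > 0 \<and> (\<forall>b\<in>K. fst p \<noteq> snd p \<longrightarrow> d \<le> norm (b$fst p - b$snd p))"] by blast
  have dd: "\<And>p. dd p > 0" "\<And>p b. b \<in> K \<Longrightarrow> fst p \<noteq> snd p \<Longrightarrow> dd p \<le> norm (b$fst p - b$snd p)"
    using ddp by auto
  define D where "D = Min (range dd)"
  have "D > 0" unfolding D_def using dd(1) by (subst Min_gr_iff) auto
  moreover have "D \<le> dd p" for p unfolding D_def by (rule Min_le) auto
  moreover have "\<forall>b\<in>K. \<forall>i k. i \<noteq> k \<longrightarrow> D \<le> norm (b$i - b$k)"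
  proof (intro ballI allI impI)
    fix b i k assume "b \<in> K" "(i::'n) \<noteq> k"
    then have "dd (i,k) \<le> norm (b$i - b$k)" using dd(2)[of b "(i,k)"] by simp
    then show "D \<le> norm (b$i - b$k)" using \<open>D \<le> dd (i,k)\<close> by linarith
  qed
  ultimately show ?thesis by blast
qed

theorem mainTheorem15:
  fixes K :: "(complex ^ 'n) set"
  assumes "compact K" and "K \<subseteq> config_space"
  shows "\<exists>\<epsilon>>0. \<forall>b\<in>K. \<forall>a :: complex ^ 'n.
           (\<forall>j. 0 < norm (a $ j) \<and> norm (a $ j) \<le> \<epsilon>) \<longrightarrow>
           n_good CARD('n) (Rab_preimage_disc a b)"
proof -
  obtain D where D: "D > 0" "\<forall>b\<in>K. \<forall>i k. i \<noteq> k \<longrightarrow> D \<le> norm (b$i - b$k)"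
    using separation[OF assms] by (elim exE conjE)
  show ?thesis
  proof (intro exI[of _ "D / (64 * real CARD('n))"] conjI ballI allI impI)
    show "D / (64 * real CARD('n)) > 0" using D by simp
    fix b :: "complex ^ 'n" and a :: "complex ^ 'n"
    assume b: "b \<in> K" and a: "\<forall>j. 0 < norm (a $ j) \<and> norm (a $ j) \<le> D / (64 * real CARD('n))"
    have loc: "gsetup a b D"
    proof
      show "D > 0" by (rule D(1))
      show "D \<le> norm (b$i - b$k)" if "i \<noteq> k" for i k using D(2) b that by blast
      show "0 < norm (a$j)" for j using a by blast
      show "norm (a$j) \<le> D / (64 * real CARD('n))" for j using a by blast
    qed
    show "n_good CARD('n) (Rab_preimage_disc a b)" by (rule gsetup.ngood[OF loc])
  qed
qed

end
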